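(* Let $Q=[0,1]^3$ and for a finite set $Y\subseteq Q$ let $E(Y)=\int_Q\operatorname{dist}^2(x,Y)\,dx=\sum_{y\in Y}\int_{V_y}|x-y|^2dx$, where $V_y=\{x\in Q:|x-y|\le|x-z|\ \forall z\in Y\}$ is the Voronoi cell of $y$. For each $n$ let $Y_n$ be a minimizer of $E$ among sets of $n$ points in $Q$. Let $\Omega\subseteq Q$ be an arbitrary cube with positive volume. Then for all sufficiently large $n$: (1) the contribution to the energy, $\sum\int_{V_y}|x-y|^2dx$, of the Voronoi cells $V_y$ ($y\in Y_n$) intersecting $\partial\Omega$ is of order $O(n^{-1})$; (2) the contribution to the energy of the Voronoi cells contained in $\Omega$ and not intersecting $\partial\Omega$ is of order $O(n^{-2/3})$. Consequently, the energy contribution of the Voronoi cells intersecting $\partial\Omega$ is negligible compared to the energy contribution of the Voronoi cells in $\Omega$ not intersecting $\partial\Omega$. *)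

theory Defs
  imports "HOL-Analysis.Analysis" "HOL-Library.Landau_Symbols"
begin

type_synonym pt = "real ^ 3"

definition Qcube :: "pt set" where
  "Qcube = cbox 0 One"

definition energy :: "pt set \<Rightarrow> real" where
  "energy Y = integral Qcube (\<lambda>x. (infdist x Y)\<^sup>2)"

definition voronoi :: "pt set \<Rightarrow> pt \<Rightarrow> pt set" where
  "voronoi Y y = {x \<in> Qcube. \<forall>z\<in>Y. dist x y \<le> dist x z}"

definition cell_energy :: "pt set \<Rightarrow> pt \<Rightarrow> real" where
  "cell_energy Y y = integral (voronoi Y y) (\<lambda>x. (dist x y)\<^sup>2)"

definition is_minimizer :: "nat \<Rightarrow> pt set \<Rightarrow> bool" where
  "is_minimizer n Y \<longleftrightarrow> finite Y \<and> card Y = n \<and> Y \<subseteq> Qcube \<and>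
     (\<forall>Z. finite Z \<and> card Z = n \<and> Z \<subseteq> Qcube \<longrightarrow> energy Y \<le> energy Z)"

definition is_cube :: "pt set \<Rightarrow> bool" where
  "is_cube \<Omega> \<longleftrightarrow> (\<exists>a s. s > 0 \<and> \<Omega> = cbox a (a + s *\<^sub>R One))"

definition boundary_energy :: "pt set \<Rightarrow> pt set \<Rightarrow> real" where
  "boundary_energy \<Omega> Y = (\<Sum>y\<in>{y\<in>Y. voronoi Y y \<inter> frontier \<Omega> \<noteq> {}}. cell_energy Y y)"

definition interior_energy :: "pt set \<Rightarrow> pt set \<Rightarrow> real" where
  "interior_energy \<Omega> Y = (\<Sum>y\<in>{y\<in>Y. voronoi Y y \<subseteq> \<Omega> \<and> voronoi Y y \<inter> frontier \<Omega> = {}}. cell_energy Y y)"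

end

theory Submission
  imports Defs "HOL-Real_Asymp.Real_Asymp"
begin


lemma one_nth[simp]: "(One::pt) $ i = 1"
  by (metis one_index Cart_1)

lemma mem_Qcube: "x \<in> Qcube \<longleftrightarrow> (\<forall>i. 0 \<le> x$i \<and> x$i \<le> 1)"
  unfolding Qcube_def mem_box_cart by (simp only: one_nth zero_index)

lemma compact_Qcube: "compact Qcube" unfolding Qcube_def by simp

lemma measure_Qcube: "measure lborel Qcube = 1"
  unfolding Qcube_def by (simp add: content_cbox_cart)

lemma coord_le_dist: "\<bar>x$i - y$i\<bar> \<le> dist x (y::pt)"
  by (metis dist_norm vector_minus_component component_le_norm_cart)

lemma dist_le_l1: "dist x (y::pt) \<le> \<bar>x$1 - y$1\<bar> + \<bar>x$2 - y$2\<bar> + \<bar>x$3 - y$3\<bar>"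
  using norm_le_l1_cart[of "x - y"] by (simp add: dist_norm sum_3)

lemma nearest:
  fixes Y :: "pt set"
  assumes "finite Y" "Y \<noteq> {}"
  obtains y where "y \<in> Y" "infdist x Y = dist x y"
  using infdist_attains_inf[of Y x] assms finite_imp_closed by blast

lemma vor_infdist:
  assumes "finite Y" "y \<in> Y" "x \<in> voronoi Y y"
  shows "infdist x Y = dist x y"
proof -
  obtain w where "w \<in> Y" "infdist x Y = dist x w" using nearest assms by blast
  moreover have "dist x y \<le> dist x w" using assms(3) \<open>w\<in>Y\<close> unfolding voronoi_def by auto
  ultimately show ?thesis using infdist_le[OF assms(2), of x] by linarith
qed

lemma vor_sub: "voronoi Y y \<subseteq> Qcube" unfolding voronoi_def by auto

lemma vor_cover:
  assumes "finite Y" "Y \<noteq> {}"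
  shows "(\<Union>y\<in>Y. voronoi Y y) = Qcube"
proof
  show "(\<Union>y\<in>Y. voronoi Y y) \<subseteq> Qcube" using vor_sub by blast
  show "Qcube \<subseteq> (\<Union>y\<in>Y. voronoi Y y)"
  proof
    fix x assume "x \<in> Qcube"
    obtain w where "w \<in> Y" "infdist x Y = dist x w" using nearest assms by blast
    then have "x \<in> voronoi Y w" using \<open>x \<in> Qcube\<close> infdist_le[of _ Y x] unfolding voronoi_def by force
    then show "x \<in> (\<Union>y\<in>Y. voronoi Y y)" using \<open>w\<in>Y\<close> by blast
  qed
qed

lemma closed_vor: "closed (voronoi Y y)"
proof -
  have "voronoi Y y = Qcube \<inter> (\<Inter>z\<in>Y. {x. dist x y \<le> dist x z})"
    unfolding voronoi_def by auto
  moreover have "closed {x. dist x y \<le> dist x z}" for z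
    by (rule closed_Collect_le) (auto intro: continuous_on_dist continuous_on_id continuous_on_const)
  then have "closed (\<Inter>z\<in>Y. {x. dist x y \<le> dist x z})"
    by (simp add: closed_INT)
  moreover have "closed Qcube" unfolding Qcube_def by (rule closed_cbox)
  ultimately show ?thesis using closed_Int by auto
qed

lemma integrable_closed_sub:
  fixes f :: "pt \<Rightarrow> real"
  assumes "continuous_on Qcube f" "closed T" "T \<subseteq> Qcube"
  shows "f integrable_on T"
proof -
  have "f absolutely_integrable_on Qcube"
    using assms(1) unfolding Qcube_def by (simp add: absolutely_integrable_continuous)
  moreover have "T \<in> sets lebesgue" using assms(2) by simp
  ultimately have "f absolutely_integrable_on T"
    using set_integrable_subset assms(3) by blast
  then show ?thesis using set_lebesgue_integral_eq_integral(1) by blast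
qed

lemma negligible_overlap:
  assumes "y \<noteq> z" and that: "y \<in> Y" "z \<in> Y"
  shows "negligible (voronoi Y y \<inter> voronoi Y z)"
proof -
  have "voronoi Y y \<inter> voronoi Y z \<subseteq> {x. (2 *\<^sub>R (z - y)) \<bullet> x = z \<bullet> z - y \<bullet> y}"
  proof
    fix x assume "x \<in> voronoi Y y \<inter> voronoi Y z"
    then have "dist x y = dist x z" using that unfolding voronoi_def by (auto intro: antisym)
    then have "(norm (x - y))^2 = (norm (x - z))^2" by (simp add: dist_norm)
    then have e: "(x - y) \<bullet> (x - y) = (x - z) \<bullet> (x - z)" by (simp add: power2_norm_eq_inner)
    have e1: "(x - y) \<bullet> (x - y) = x \<bullet> x - 2 * (x \<bullet> y) + y \<bullet> y"
      by (simp add: inner_diff_left inner_diff_right inner_commute[of y x])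
    have e2: "(x - z) \<bullet> (x - z) = x \<bullet> x - 2 * (x \<bullet> z) + z \<bullet> z"
      by (simp add: inner_diff_left inner_diff_right inner_commute[of z x])
    have e3: "(2 *\<^sub>R (z - y)) \<bullet> x = 2 * (x \<bullet> z) - 2 * (x \<bullet> y)"
      by (simp add: inner_diff_left inner_commute[of z x] inner_commute[of y x])
    show "x \<in> {x. (2 *\<^sub>R (z - y)) \<bullet> x = z \<bullet> z - y \<bullet> y}"
      using e e1 e2 e3 by simp
  qed
  moreover have "2 *\<^sub>R (z - y) \<noteq> 0" using assms by simp
  ultimately show ?thesis using negligible_subset[OF negligible_hyperplane] by blast
qed

lemma has_integral_vor_UN:
  fixes f :: "pt \<Rightarrow> real"
  assumes "finite Y" "S \<subseteq> Y" "continuous_on Qcube f"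
  shows "(f has_integral (\<Sum>y\<in>S. integral (voronoi Y y) f)) (\<Union>y\<in>S. voronoi Y y)"
proof (rule has_integral_UN)
  show "finite S" using assms finite_subset by blast
  show "(f has_integral integral (voronoi Y y) f) (voronoi Y y)" if "y \<in> S" for y
    using integrable_integral[OF integrable_closed_sub[OF assms(3) closed_vor vor_sub]] .
  show "pairwise (\<lambda>i i'. negligible (voronoi Y i \<inter> voronoi Y i')) S"
    unfolding pairwise_def using negligible_overlap assms(2) by blast
qed

lemma cont_sq: "continuous_on A (\<lambda>x. (infdist x Y)^2)"
  by (intro continuous_intros continuous_on_infdist)

lemma cells_sum:
  assumes "finite Y" "S \<subseteq> Y"
  shows "(\<Sum>y\<in>S. cell_energy Y y) = integral (\<Union>y\<in>S. voronoi Y y) (\<lambda>x. (infdist x Y)^2)"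
proof -
  have "(\<Sum>y\<in>S. cell_energy Y y) = (\<Sum>y\<in>S. integral (voronoi Y y) (\<lambda>x. (infdist x Y)^2))"
  proof (rule sum.cong)
    fix y assume "y \<in> S"
    then show "cell_energy Y y = integral (voronoi Y y) (\<lambda>x. (infdist x Y)^2)"
      unfolding cell_energy_def using vor_infdist assms by (intro integral_cong) auto
  qed simp
  then show ?thesis using integral_unique[OF has_integral_vor_UN[OF assms cont_sq]] by simp
qed



lemma cell_bounds:
  fixes t :: real and k :: nat
  assumes "k \<ge> 1" "0 \<le> t" "t \<le> 1"
  shows "real (min (k-1) (nat \<lfloor>real k * t\<rfloor>)) \<le> real k * t \<and>
         real k * t \<le> real (min (k-1) (nat \<lfloor>real k * t\<rfloor>)) + 1"
proof (cases "nat \<lfloor>real k * t\<rfloor> \<le> k - 1")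
  case True
  then have "min (k-1) (nat \<lfloor>real k * t\<rfloor>) = nat \<lfloor>real k * t\<rfloor>" by simp
  moreover have "real (nat \<lfloor>real k * t\<rfloor>) = of_int \<lfloor>real k * t\<rfloor>"
    using assms by simp
  ultimately show ?thesis by (simp; linarith)
next
  case False
  then have "min (k-1) (nat \<lfloor>real k * t\<rfloor>) = k - 1" by simp
  moreover have "real k * t \<ge> real k" using False assms by linarith
  then have "t = 1" using assms by (simp add: mult_le_cancel_left1)
  ultimately show ?thesis using assms by (simp add: of_nat_diff)
qed

lemma close_pair:
  fixes S :: "pt set" and k :: nat
  assumes "finite S" "S \<subseteq> Qcube" "k \<ge> 1" "k^3 < card S"
  obtains y1 y2 where "y1 \<in> S" "y2 \<in> S" "y1 \<noteq> y2" "dist y1 y2 \<le> 3 / real k"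
proof -
  define c :: "real \<Rightarrow> nat" where "c t = min (k-1) (nat \<lfloor>real k * t\<rfloor>)" for t
  define \<phi> where "\<phi> y = (c (y$1), c (y$2), c (y$3))" for y :: pt
  have "c t < k" for t unfolding c_def using assms(3) by simp
  then have img: "\<phi> ` S \<subseteq> {..<k} \<times> {..<k} \<times> {..<k}" unfolding \<phi>_def by auto
  have "card (\<phi> ` S) \<le> card ({..<k} \<times> {..<k} \<times> {..<k})"
    by (rule card_mono[OF _ img]) simp
  also have "\<dots> = k^3" by (simp add: card_cartesian_product power3_eq_cube)
  finally have "\<not> inj_on \<phi> S" using assms(4) pigeonhole by (meson le_less_trans)
  then obtain y1 y2 where y: "y1 \<in> S" "y2 \<in> S" "y1 \<noteq> y2" "\<phi> y1 = \<phi> y2"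
    unfolding inj_on_def by blast
  have co: "\<bar>y1$i - y2$i\<bar> \<le> 1 / real k" if "c (y1$i) = c (y2$i)" for i
  proof -
    have r1: "0 \<le> y1$i" "y1$i \<le> 1" "0 \<le> y2$i" "y2$i \<le> 1"
      using y(1,2) assms(2) mem_Qcube by blast+
    have b1: "real (c (y1$i)) \<le> real k * y1$i \<and> real k * y1$i \<le> real (c (y1$i)) + 1"
      unfolding c_def using cell_bounds assms(3) r1 by blast
    have b2: "real (c (y2$i)) \<le> real k * y2$i \<and> real k * y2$i \<le> real (c (y2$i)) + 1"
      unfolding c_def using cell_bounds assms(3) r1 by blast
    have "\<bar>real k * y1$i - real k * y2$i\<bar> \<le> 1" using b1 b2 that by linarith
    then have "real k * \<bar>y1$i - y2$i\<bar> \<le> 1"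
      by (simp add: abs_mult right_diff_distrib[symmetric])
    then show ?thesis using assms(3) by (simp add: field_simps)
  qed
  have "\<bar>y1$1 - y2$1\<bar> \<le> 1 / real k" "\<bar>y1$2 - y2$2\<bar> \<le> 1 / real k" "\<bar>y1$3 - y2$3\<bar> \<le> 1 / real k"
    using co y(4) unfolding \<phi>_def by auto
  then have "dist y1 y2 \<le> 3 / real k" using dist_le_l1[of y1 y2] by simp
  then show ?thesis using that y by blast
qed

lemma corner_cube:
  assumes "x0 \<in> Qcube" "0 < s" "s \<le> 1/2"
  obtains lo where "cbox lo (lo + s *\<^sub>R One) \<subseteq> Qcube"
    "\<And>x. x \<in> cbox lo (lo + s *\<^sub>R One) \<Longrightarrow> dist x x0 \<le> 3 * s"
    "measure lborel (cbox lo (lo + s *\<^sub>R One)) = s^3"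
proof -
  define lo :: pt where "lo = (\<chi> i. if x0$i \<le> 1/2 then x0$i else x0$i - s)"
  have x0: "0 \<le> x0$i \<and> x0$i \<le> 1" for i using assms(1) mem_Qcube by blast
  have mem: "x \<in> cbox lo (lo + s *\<^sub>R One) \<longleftrightarrow> (\<forall>i. lo$i \<le> x$i \<and> x$i \<le> lo$i + s)" for x
    unfolding mem_box_cart by (simp only: vector_add_component vector_scaleR_component one_nth real_scaleR_def mult_1_right)
  have sub: "cbox lo (lo + s *\<^sub>R One) \<subseteq> Qcube"
  proof
    fix x assume "x \<in> cbox lo (lo + s *\<^sub>R One)"
    then have "lo$i \<le> x$i \<and> x$i \<le> lo$i + s" for i using mem by blast
    have "0 \<le> x$i \<and> x$i \<le> 1" for i
    proof -
      have h: "lo$i \<le> x$i \<and> x$i \<le> lo$i + s" by fact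
      show ?thesis
      proof (cases "x0$i \<le> 1/2")
        case True then show ?thesis using h x0[of i] assms(2,3) unfolding lo_def by simp
      next
        case False then show ?thesis using h x0[of i] assms(2,3) unfolding lo_def by simp
      qed
    qed
    then show "x \<in> Qcube" unfolding mem_Qcube by blast
  qed
  have dd: "dist x x0 \<le> 3 * s" if "x \<in> cbox lo (lo + s *\<^sub>R One)" for x
  proof -
    have hh: "lo$i \<le> x$i \<and> x$i \<le> lo$i + s" for i using mem that by blast
    have "\<bar>x$i - x0$i\<bar> \<le> s" for i
      using hh[of i] by (cases "x0$i \<le> 1/2") (auto simp: lo_def)
    then have "\<bar>x$1 - x0$1\<bar> \<le> s" "\<bar>x$2 - x0$2\<bar> \<le> s" "\<bar>x$3 - x0$3\<bar> \<le> s" by blast+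
    then show ?thesis using dist_le_l1[of x x0] by linarith
  qed
  have "measure lborel (cbox lo (lo + s *\<^sub>R One)) = (\<Prod>i\<in>UNIV. (lo + s *\<^sub>R One)$i - lo$i)"
    by (rule content_cbox_cart) (use mem assms(2) in \<open>force\<close>)
  also have "\<dots> = s^3" by (simp only: vector_add_component vector_scaleR_component one_nth real_scaleR_def mult_1_right) simp
  finally show ?thesis using that sub dd by blast
qed



lemma intQ: "continuous_on Qcube f \<Longrightarrow> (f::pt\<Rightarrow>real) integrable_on Qcube"
  unfolding Qcube_def by (rule integrable_continuous)

lemma integral_Q_const: "integral Qcube (\<lambda>x. c) = (c::real)"
  using measure_Qcube unfolding Qcube_def by simp

lemma zero_in_Q: "0 \<in> Qcube" unfolding mem_Qcube by simp

lemma vol_sum: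
  assumes "finite Y" "Y \<noteq> {}"
  shows "(\<Sum>y\<in>Y. integral (voronoi Y y) (\<lambda>x. 1::real)) = 1"
proof -
  have "((\<lambda>x. 1::real) has_integral (\<Sum>y\<in>Y. integral (voronoi Y y) (\<lambda>x. 1::real))) Qcube"
    using has_integral_vor_UN[OF assms(1) order_refl, of "\<lambda>x. 1"] vor_cover[OF assms] by simp
  then show ?thesis using integral_Q_const[of 1] integral_unique by metis
qed

lemma vol_nonneg: "0 \<le> integral (voronoi Y y) (\<lambda>x. 1::real)"
  by (rule integral_nonneg) (auto intro!: integrable_closed_sub[OF continuous_on_const closed_vor vor_sub])

lemma sq_aux:
  fixes A B F :: real
  assumes "0 \<le> F" "F \<le> A" "0 \<le> B"
  shows "(min A B)^2 \<le> A^2 - (F^2 - min (F^2) (B^2))"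
proof (cases "B \<le> F")
  case True
  then have "B^2 \<le> F^2" using assms power_mono by blast
  then have "min (F^2) (B^2) = B^2" by simp
  moreover have "F^2 \<le> A^2" using assms power_mono by blast
  moreover have "(min A B)^2 \<le> B^2" using assms by (simp add: power_mono)
  ultimately show ?thesis by linarith
next
  case False
  then have "F^2 \<le> B^2" using assms power_mono by (metis linorder_not_le order_less_imp_le)
  then have "min (F^2) (B^2) = F^2" by simp
  moreover have "(min A B)^2 \<le> A^2" using assms by (simp add: power_mono)
  ultimately show ?thesis by linarith
qed

lemma arith_final:
  fixes \<rho> h D n :: real
  assumes "\<rho> > 0" "h > 0" "n = h^3" "D \<ge> 0" "D * h \<le> 12"
    and ineq: "\<rho>^5 / 3456 \<le> (2*D*\<rho> + D^2) * (2/n)"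
  shows "\<rho> * h \<le> 1161216"
proof -
  define t where "t = \<rho> * h"
  define e where "e = D * h"
  have t0: "t > 0" using assms t_def by simp
  have e0: "0 \<le> e" "e \<le> 12" using assms e_def by auto
  have "\<rho>^5 \<le> 6912 * (2*D*\<rho> + D^2) / h^3" using ineq assms(3) by (simp add: field_simps)
  then have "\<rho>^5 * h^5 \<le> 6912 * (2*D*\<rho> + D^2) / h^3 * h^5"
    using assms(2) by (intro mult_right_mono) auto
  also have "\<dots> = 6912 * (2*D*\<rho> + D^2) * h^2" using assms(2) by (simp add: field_simps power_eq_if)
  also have "\<dots> = 6912 * (2*e*t + e^2)" unfolding e_def t_def by (simp add: algebra_simps power2_eq_square)
  finally have "t^5 \<le> 6912 * (2*e*t + e^2)" unfolding t_def by (simp add: power_mult_distrib)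
  also have "\<dots> \<le> 6912 * (24*t + 144)"
  proof -
    have "e*t \<le> 12 * t" using e0 t0 by (simp add: mult_right_mono)
    moreover have "e^2 \<le> 144" using e0 power_mono[of e 12 2] by simp
    ultimately show ?thesis by simp
  qed
  finally have t5: "t^5 \<le> 6912 * (24*t + 144)" .
  show ?thesis
  proof (cases "t \<le> 1")
    case True then show ?thesis unfolding t_def by simp
  next
    case False
    then have "t^5 \<le> 1161216 * t" using t5 by simp
    then have "t * t^4 \<le> t * 1161216" by (simp add: power_Suc[symmetric] mult.commute)
    then have "t^4 \<le> 1161216" using t0 by simp
    moreover have "t \<le> t^4"
    proof -
      have "1 \<le> t^3" using False by (simp add: one_le_power)
      then have "t * 1 \<le> t * t^3" using t0 by (intro mult_left_mono) auto
      also have "t * t^3 = t^4" by (simp add: power_Suc[symmetric])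
      finally show ?thesis by simp
    qed
    ultimately show ?thesis unfolding t_def by simp
  qed
qed



lemma covering_max:
  assumes min: "is_minimizer n Y" and n64: "n \<ge> 64"
    and x0Q: "x0 \<in> Qcube" and x0max: "\<And>x. x \<in> Qcube \<Longrightarrow> infdist x Y \<le> infdist x0 Y"
  shows "infdist x0 Y * real n powr (1/3) \<le> 1161216"
proof -
  have fin: "finite Y" and cardY: "card Y = n" and YQ: "Y \<subseteq> Qcube"
    and opt: "\<And>Z. finite Z \<Longrightarrow> card Z = n \<Longrightarrow> Z \<subseteq> Qcube \<Longrightarrow> energy Y \<le> energy Z"
    using min unfolding is_minimizer_def by auto
  have Yne: "Y \<noteq> {}" using cardY n64 by auto
  define \<rho> where "\<rho> = infdist x0 Y"
  define h where "h = real n powr (1/3)"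
  have npos: "real n > 0" using n64 by simp
  have h0: "h > 0" unfolding h_def using npos by simp
  have h3: "h^3 = real n" unfolding h_def using npos
    by (subst powr_power) auto
  show ?thesis
  proof (cases "\<rho> = 0")
    case True then show ?thesis unfolding \<rho>_def by simp
  next
    case False
    then have rpos: "\<rho> > 0" unfolding \<rho>_def using infdist_nonneg[of x0 Y] by linarith
    have x0Y: "x0 \<notin> Y" using False infdist_zero unfolding \<rho>_def by blast
    obtain y0 where "y0 \<in> Y" using Yne by blast
    have "\<rho> \<le> dist x0 y0" unfolding \<rho>_def using infdist_le[OF \<open>y0\<in>Y\<close>] .
    also have "\<dots> \<le> 3"
    proof -
      have "\<bar>x0$i - y0$i\<bar> \<le> 1" for i
        using x0Q YQ \<open>y0\<in>Y\<close> mem_Qcube by (smt (verit) subsetD)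
      then have "\<bar>x0$1 - y0$1\<bar> \<le> 1" "\<bar>x0$2 - y0$2\<bar> \<le> 1" "\<bar>x0$3 - y0$3\<bar> \<le> 1" by blast+
      then show ?thesis using dist_le_l1[of x0 y0] by linarith
    qed
    finally have r3: "\<rho> \<le> 3" .
    have h4: "h \<ge> 4"
    proof (rule ccontr)
      assume "\<not> h \<ge> 4"
      then have "h^3 < 4^3" using h0 by (intro power_strict_mono) auto
      then show False using h3 n64 by simp
    qed
    define k where "k = nat \<lfloor>h/2\<rfloor>"
    have kle: "real k \<le> h/2" unfolding k_def using h0 of_int_floor_le[of "h/2"] by simp
    have kge: "real k \<ge> h/4" unfolding k_def using h4 by linarith
    have k1: "k \<ge> 1" using kge h4 by simp
    have "real (k^3) \<le> (h/2)^3" using kle by (simp add: power_mono)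
    also have "\<dots> = real n / 8" using h3 by (simp add: power_divide)
    finally have k3: "real (k^3) \<le> real n / 8" .
    define v where "v y = integral (voronoi Y y) (\<lambda>x. 1::real)" for y
    define S where "S = {y\<in>Y. v y \<le> 2 / real n}"
    have "real (card (Y - S)) * (2 / real n) \<le> (\<Sum>y\<in>Y - S. v y)"
    proof -
      have "(\<Sum>y\<in>Y - S. 2 / real n) \<le> (\<Sum>y\<in>Y - S. v y)"
        by (rule sum_mono) (auto simp: S_def)
      then show ?thesis by simp
    qed
    also have "\<dots> \<le> (\<Sum>y\<in>Y. v y)"
      by (rule sum_mono2[OF fin]) (auto simp: v_def vol_nonneg)
    also have "\<dots> = 1" unfolding v_def using vol_sum[OF fin Yne] .
    finally have "real (card (Y - S)) \<le> real n / 2" using npos by (simp add: field_simps)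
    have SY: "S \<subseteq> Y" by (auto simp: S_def)
    have finS: "finite S" using fin SY finite_subset by blast
    have "card (Y - S) = card Y - card S" by (rule card_Diff_subset[OF finS SY])
    moreover have "card S \<le> card Y" by (rule card_mono[OF fin SY])
    ultimately have "card S + card (Y - S) = n" using cardY by simp
    then have "real (card S) + real (card (Y - S)) = real n" by (metis of_nat_add)
    then have "real (card S) \<ge> real n / 2" using \<open>real (card (Y - S)) \<le> real n / 2\<close> by linarith
    then have kS: "k^3 < card S" using k3 npos by linarith
    have SQ: "S \<subseteq> Qcube" using YQ SY by blast
    obtain y1 y2 where y12: "y1 \<in> S" "y2 \<in> S" "y1 \<noteq> y2" "dist y1 y2 \<le> 3 / real k"
      by (rule close_pair[OF finS SQ k1 kS])
    define d where "d = dist y1 y2"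
    have y1Y: "y1 \<in> Y" and y2Y: "y2 \<in> Y" and vy1: "v y1 \<le> 2 / real n" using y12 S_def by auto
    define Y' where "Y' = insert x0 (Y - {y1})"
    have finY': "finite Y'" using fin Y'_def by simp
    have "card Y' = n" unfolding Y'_def using fin x0Y y1Y cardY n64
      by (simp add: card_insert_if)
    moreover have "Y' \<subseteq> Qcube" using YQ x0Q Y'_def by auto
    ultimately have eY: "energy Y \<le> energy Y'" using opt finY' by blast
    define f where "f x = (infdist x Y)^2" for x
    define g where "g x = (infdist x (Y - {y1}))^2" for x
    define hh where "hh x = (dist x x0)^2" for x
    define c where "c = 2*d*\<rho> + d^2"
    have cf: "continuous_on Qcube f" "continuous_on Qcube g" "continuous_on Qcube hh"
      unfolding f_def g_def hh_def
      by (rule cont_sq, rule cont_sq, rule continuous_on_power[OF continuous_on_dist[OF continuous_on_id continuous_on_const]])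
    have Yne': "Y - {y1} \<noteq> {}" using y2Y y12(3) by blast
    have fg: "f x \<le> g x" for x
    proof -
      have "infdist x Y \<le> infdist x (Y - {y1})" by (rule infdist_mono) (use Yne' in auto)
      then show ?thesis unfolding f_def g_def by (rule power_mono[OF _ infdist_nonneg])
    qed
    have P2: "(infdist x Y')^2 \<le> g x - (f x - min (f x) (hh x))" for x
    proof -
      have "Y' = {x0} \<union> (Y - {y1})" unfolding Y'_def by auto
      then have "infdist x Y' = min (dist x x0) (infdist x (Y - {y1}))"
        using infdist_Un_min[of "{x0}" "Y - {y1}" x] Yne' by (simp add: infdist_singleton)
      then have "infdist x Y' = min (infdist x (Y - {y1})) (dist x x0)" by simp
      moreover have "infdist x Y \<le> infdist x (Y - {y1})" by (rule infdist_mono) (use Yne' in auto)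
      ultimately show ?thesis unfolding f_def g_def hh_def
        using sq_aux[OF infdist_nonneg _ zero_le_dist, of x Y "infdist x (Y - {y1})" x x0]
        by simp
    qed
    define s where "s = \<rho> / 12"
    obtain lo where C: "cbox lo (lo + s *\<^sub>R One) \<subseteq> Qcube"
      "\<And>x. x \<in> cbox lo (lo + s *\<^sub>R One) \<Longrightarrow> dist x x0 \<le> 3 * s"
      "measure lborel (cbox lo (lo + s *\<^sub>R One)) = s^3"
      using corner_cube[OF x0Q, of s] rpos r3 unfolding s_def by auto
    define CC where "CC = cbox lo (lo + s *\<^sub>R One)"
    have P3: "(if x \<in> CC then \<rho>^2/2 else 0) \<le> f x - min (f x) (hh x)" for x
    proof (cases "x \<in> CC")
      case True
      then have dx: "dist x x0 \<le> \<rho>/4" using C(2) unfolding CC_def s_def by force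
      have "infdist x0 Y \<le> infdist x Y + dist x0 x" by (rule infdist_triangle)
      then have "infdist x Y \<ge> 3*\<rho>/4" using dx unfolding \<rho>_def by (simp add: dist_commute)
      then have "f x \<ge> (3*\<rho>/4)^2" unfolding f_def using rpos by (intro power_mono) auto
      moreover have "hh x \<le> (\<rho>/4)^2" unfolding hh_def using dx by (intro power_mono) auto
      ultimately show ?thesis using True by (simp add: power2_eq_square min_def)
    next
      case False then show ?thesis by simp
    qed
    have P4: "g x - f x \<le> (if x \<in> voronoi Y y1 then c else 0)" if xQ: "x \<in> Qcube" for x
    proof (cases "x \<in> voronoi Y y1")
      case True
      have fx: "infdist x Y = dist x y1" using vor_infdist[OF fin y1Y True] .
      have "infdist x (Y - {y1}) \<le> dist x y2" using y2Y y12(3) by (intro infdist_le) auto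
      also have "\<dots> \<le> dist x y1 + d" unfolding d_def by (rule dist_triangle)
      finally have a: "infdist x (Y - {y1}) \<le> dist x y1 + d" .
      have b: "dist x y1 \<le> \<rho>" using x0max[OF xQ] fx unfolding \<rho>_def by simp
      have "g x \<le> (dist x y1 + d)^2" unfolding g_def using a infdist_nonneg by (intro power_mono) auto
      then have "g x - f x \<le> 2 * d * dist x y1 + d^2" unfolding f_def fx by (simp add: power2_eq_square algebra_simps)
      also have "\<dots> \<le> c" unfolding c_def using b d_def by (simp add: mult_left_mono)
      finally show ?thesis using True by simp
    next
      case False
      obtain w where w: "w \<in> Y" "infdist x Y = dist x w" using nearest[OF fin Yne] by blast
      have "w \<noteq> y1"
      proof
        assume "w = y1"
        then have "x \<in> voronoi Y y1" unfolding voronoi_def using xQ w infdist_le[of _ Y x] by force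
        then show False using False by blast
      qed
      then have "infdist x (Y - {y1}) \<le> dist x w" using w by (intro infdist_le) auto
      then have "g x \<le> f x" unfolding g_def f_def w(2) using infdist_nonneg by (intro power_mono) auto
      then show ?thesis using False by simp
    qed
    have iF: "f integrable_on Qcube" "g integrable_on Qcube" "hh integrable_on Qcube"
      using cf intQ by auto
    have iM: "(\<lambda>x. f x - min (f x) (hh x)) integrable_on Qcube"
      by (rule intQ[OF continuous_on_diff[OF cf(1) continuous_on_min[OF cf(1) cf(3)]]])
    have iG: "(\<lambda>x. g x - (f x - min (f x) (hh x))) integrable_on Qcube"
      by (rule integrable_diff[OF iF(2) iM])
    have "energy Y' \<le> integral Qcube (\<lambda>x. g x - (f x - min (f x) (hh x)))"
      unfolding energy_def
    proof (rule integral_le)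
      show "(\<lambda>x. (infdist x Y')\<^sup>2) integrable_on Qcube"
        by (rule intQ[OF cont_sq])
    qed (use iG P2 in auto)
    also have "\<dots> = integral Qcube g - integral Qcube (\<lambda>x. f x - min (f x) (hh x))"
      using iF iM by (simp add: integral_diff)
    finally have e1: "integral Qcube (\<lambda>x. f x - min (f x) (hh x)) \<le> integral Qcube g - integral Qcube f"
      using eY unfolding energy_def f_def by simp
    have iC: "(\<lambda>x. if x \<in> CC then \<rho>^2/2 else 0) integrable_on Qcube"
      unfolding integrable_restrict_Int using C(1) unfolding CC_def
      by (simp add: Int_absorb2 integrable_const)
    have "integral Qcube (\<lambda>x. if x \<in> CC then \<rho>^2/2 else 0) = integral CC (\<lambda>x. \<rho>^2/2)"
      unfolding integral_restrict_Int using C(1) unfolding CC_def by (simp add: Int_absorb2)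
    also have "\<dots> = s^3 * (\<rho>^2/2)" unfolding CC_def using C(3) by simp
    finally have gainI: "integral Qcube (\<lambda>x. if x \<in> CC then \<rho>^2/2 else 0) = s^3 * (\<rho>^2/2)" .
    have gain: "s^3 * (\<rho>^2/2) \<le> integral Qcube (\<lambda>x. f x - min (f x) (hh x))"
      using integral_le[OF iC iM] P3 gainI by simp
    have iV: "(\<lambda>x. if x \<in> voronoi Y y1 then c else 0) integrable_on Qcube"
      unfolding integrable_restrict_Int using vor_sub[of Y y1]
      by (simp add: Int_absorb2 integrable_closed_sub[OF continuous_on_const closed_vor vor_sub])
    have "integral Qcube (\<lambda>x. if x \<in> voronoi Y y1 then c else 0) = integral (voronoi Y y1) (\<lambda>x. c)"
      unfolding integral_restrict_Int using vor_sub[of Y y1] by (simp add: Int_absorb2)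
    also have "\<dots> = c * v y1" unfolding v_def using integral_mult_right[of "voronoi Y y1" c "\<lambda>x. 1::real"] by simp
    finally have costI: "integral Qcube (\<lambda>x. if x \<in> voronoi Y y1 then c else 0) = c * v y1" .
    have "integral Qcube g - integral Qcube f = integral Qcube (\<lambda>x. g x - f x)"
      using iF by (simp add: integral_diff)
    also have "\<dots> \<le> c * v y1"
      using integral_le[OF integrable_diff[OF iF(2) iF(1)] iV] P4 costI by simp
    also have "\<dots> \<le> c * (2 / real n)"
      using vy1 by (intro mult_left_mono) (auto simp: c_def d_def rpos less_imp_le)
    finally have main: "s^3 * (\<rho>^2/2) \<le> c * (2 / real n)" using gain e1 by linarith
    have ineq: "\<rho>^5 / 3456 \<le> (2*d*\<rho> + d^2) * (2 / real n)"
      using main unfolding s_def c_def by (simp add: power_divide field_simps power2_eq_square power3_eq_cube eval_nat_numeral)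
    have "d * h \<le> 3 / real k * h" using mult_right_mono[OF y12(4), of h] h0 unfolding d_def by simp
    also have "\<dots> \<le> 12" using kge k1 h0 by (simp add: field_simps)
    finally have dh: "d * h \<le> 12" .
    have "\<rho> * h \<le> 1161216"
      using arith_final[OF rpos h0 h3[symmetric] _ dh ineq] d_def by simp
    then show ?thesis unfolding \<rho>_def h_def .
  qed
qed



lemma ind_cbox_int:
  fixes A C :: "pt set"
  assumes "A = cbox a b" "C = cbox c d"
  shows "(\<lambda>x. if x \<in> C then 1 else 0::real) integrable_on A"
    "integral A (\<lambda>x. if x \<in> C then 1 else 0::real) \<le> measure lborel C"
proof -
  obtain u v where uv: "C \<inter> A = cbox u v" using assms Int_interval by blast
  show "(\<lambda>x. if x \<in> C then 1 else 0::real) integrable_on A"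
    unfolding integrable_restrict_Int uv by (rule integrable_const)
  have "integral A (\<lambda>x. if x \<in> C then 1 else 0::real) = measure lborel (cbox u v)"
    unfolding integral_restrict_Int uv by simp
  also have "\<dots> \<le> measure lborel C" using uv assms(2) content_subset by (metis inf_le1)
  finally show "integral A (\<lambda>x. if x \<in> C then 1 else 0::real) \<le> measure lborel C" .
qed

lemma content_cube:
  fixes a b :: pt
  assumes "\<And>i. b$i - a$i = t" "t \<ge> 0"
  shows "measure lborel (cbox a b) = t^3"
proof -
  have "a \<in> cbox a b" using assms by (simp add: mem_box_cart) (metis diff_ge_0_iff_ge)
  then have "measure lborel (cbox a b) = (\<Prod>i\<in>UNIV. b$i - a$i)"
    by (intro content_cbox_cart) blast
  also have "\<dots> = t^3" using assms(1) by simp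
  finally show ?thesis .
qed

lemma content_slab:
  fixes lo hi :: pt
  assumes "\<And>j. hi$j - lo$j = (if j = i then t else 1)" "t \<ge> 0"
  shows "measure lborel (cbox lo hi) = t"
proof -
  have "lo \<in> cbox lo hi" using assms by (simp add: mem_box_cart) (metis diff_ge_0_iff_ge zero_le_one)
  then have "measure lborel (cbox lo hi) = (\<Prod>j\<in>UNIV. hi$j - lo$j)"
    by (intro content_cbox_cart) blast
  also have "\<dots> = (\<Prod>j\<in>UNIV. if j = i then t else 1)" using assms(1) by simp
  also have "\<dots> = t" by (simp add: prod.delta)
  finally show ?thesis .
qed

lemma frontier_cube:
  assumes "p \<in> frontier (cbox a (b::pt))"
  shows "\<exists>i. p$i = a$i \<or> p$i = b$i"
proof -
  have pin: "p \<in> cbox a b" "p \<notin> box a b" using assms unfolding frontier_def by (auto simp: interior_cbox)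
  have "\<exists>i. \<not> (a$i < p$i \<and> p$i < b$i)" using pin(2) by (simp add: mem_box_cart)
  then obtain i where i: "\<not> (a$i < p$i \<and> p$i < b$i)" by blast
  have "a$i \<le> p$i" "p$i \<le> b$i" using pin(1) by (simp_all add: mem_box_cart)
  with i have "p$i = a$i \<or> p$i = b$i" by linarith
  then show ?thesis by blast
qed

lemma boundary_bound:
  fixes Y :: "pt set"
  assumes fin: "finite Y" and Yne: "Y \<noteq> {}" and YQ: "Y \<subseteq> Qcube"
    and rho: "\<And>x. x \<in> Qcube \<Longrightarrow> infdist x Y \<le> \<rho>" and r0: "\<rho> \<ge> 0"
    and Om: "\<Omega> = cbox a b"
  shows "0 \<le> boundary_energy \<Omega> Y \<and> boundary_energy \<Omega> Y \<le> 24 * \<rho>^3"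
proof -
  define B where "B = {y\<in>Y. voronoi Y y \<inter> frontier \<Omega> \<noteq> {}}"
  define W where "W = (\<Union>y\<in>B. voronoi Y y)"
  define F where "F x = (infdist x Y)^2" for x
  have BY: "B \<subseteq> Y" unfolding B_def by auto
  have be: "boundary_energy \<Omega> Y = integral W F"
    unfolding boundary_energy_def W_def F_def using cells_sum[OF fin BY] B_def by simp
  have WQ: "W \<subseteq> Qcube" unfolding W_def using vor_sub by blast
  have finB: "finite B" using fin BY finite_subset by blast
  have clW: "closed W" unfolding W_def using finB closed_vor by (intro closed_UN) auto
  have iW: "F integrable_on W" unfolding F_def by (rule integrable_closed_sub[OF cont_sq clW WQ])
  have nn: "0 \<le> integral W F" using iW by (rule integral_nonneg) (simp add: F_def)
  define lo where "lo c i = ((\<chi> j. if j = i then c - 2*\<rho> else 0) :: pt)" for c i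
  define hi where "hi c i = ((\<chi> j. if j = i then c + 2*\<rho> else 1) :: pt)" for c i
  define G where "G x = \<rho>^2 * (\<Sum>i\<in>UNIV. (if x \<in> cbox (lo (a$i) i) (hi (a$i) i) then 1 else 0)
        + (if x \<in> cbox (lo (b$i) i) (hi (b$i) i) then 1 else 0))" for x
  have pw: "(if x \<in> W then F x else 0) \<le> G x" if xQ: "x \<in> Qcube" for x
  proof (cases "x \<in> W")
    case True
    then obtain y where y: "y \<in> B" "x \<in> voronoi Y y" unfolding W_def by blast
    then obtain p where p: "p \<in> voronoi Y y" "p \<in> frontier \<Omega>" unfolding B_def by blast
    have yY: "y \<in> Y" using y BY by blast
    have "dist x p \<le> dist x y + dist p y" by (rule dist_triangle2)
    also have "\<dots> \<le> 2 * \<rho>"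
      using vor_infdist[OF fin yY y(2)] vor_infdist[OF fin yY p(1)] rho[OF xQ] rho[of p] p(1) vor_sub by force
    finally have dxp: "dist x p \<le> 2 * \<rho>" .
    obtain i where i: "p$i = a$i \<or> p$i = b$i" using frontier_cube p(2) Om by blast
    have xi: "\<bar>x$i - p$i\<bar> \<le> 2 * \<rho>" using coord_le_dist[of x i p] dxp by linarith
    have x01: "0 \<le> x$j \<and> x$j \<le> 1" for j using xQ mem_Qcube by blast
    have inslab: "x \<in> cbox (lo (p$i) i) (hi (p$i) i)"
      unfolding lo_def hi_def mem_box_cart using xi x01 by auto
    let ?t = "\<lambda>i. (if x \<in> cbox (lo (a$i) i) (hi (a$i) i) then 1 else 0)
        + (if x \<in> cbox (lo (b$i) i) (hi (b$i) i) then 1 else 0::real)"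
    have "1 \<le> ?t i" using i inslab by auto
    also have "?t i \<le> (\<Sum>i\<in>UNIV. ?t i)" by (rule member_le_sum) auto
    finally have s1: "1 \<le> (\<Sum>i\<in>UNIV. ?t i)" .
    have "F x \<le> \<rho>^2" unfolding F_def using rho[OF xQ] infdist_nonneg by (intro power_mono) auto
    also have "\<dots> \<le> G x" unfolding G_def using s1 by (simp add: mult_le_cancel_left1)
    finally show ?thesis using True by simp
  next
    case False
    then show ?thesis unfolding G_def by (simp add: sum_nonneg)
  qed
  have slab_meas: "measure lborel (cbox (lo c i) (hi c i)) = 4 * \<rho>" for c i
    by (rule content_slab[of _ _ i]) (use r0 in \<open>auto simp: lo_def hi_def\<close>)
  have Qc: "Qcube = cbox 0 One" by (simp add: Qcube_def)
  have iS: "(\<lambda>x. if x \<in> cbox (lo c i) (hi c i) then 1 else 0::real) integrable_on Qcube" for c i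
    using ind_cbox_int(1)[OF Qc refl] .
  have bS: "integral Qcube (\<lambda>x. if x \<in> cbox (lo c i) (hi c i) then 1 else 0::real) \<le> 4 * \<rho>" for c i
    using ind_cbox_int(2)[OF Qc refl, of "lo c i" "hi c i"] slab_meas[of c i] by simp
  have iG: "G integrable_on Qcube" unfolding G_def
    by (intro integrable_on_mult_right integrable_sum integrable_add iS) auto
  have "integral W F = integral Qcube (\<lambda>x. if x \<in> W then F x else 0)"
    unfolding integral_restrict_Int using WQ by (simp add: Int_absorb2)
  also have "\<dots> \<le> integral Qcube G"
  proof (rule integral_le)
    show "(\<lambda>x. if x \<in> W then F x else 0) integrable_on Qcube"
      unfolding integrable_restrict_Int using WQ iW by (simp add: Int_absorb2)
  qed (use iG pw in auto)
  also have "\<dots> = \<rho>^2 * (\<Sum>i\<in>UNIV. integral Qcube (\<lambda>x. if x \<in> cbox (lo (a$i) i) (hi (a$i) i) then 1 else 0::real)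
        + integral Qcube (\<lambda>x. if x \<in> cbox (lo (b$i) i) (hi (b$i) i) then 1 else 0::real))"
    unfolding G_def using iS by (simp add: integral_sum integral_add integrable_add)
  also have "\<dots> \<le> \<rho>^2 * (\<Sum>i\<in>(UNIV::3 set). 4 * \<rho> + 4 * \<rho>)"
    by (intro mult_left_mono sum_mono add_mono bS) auto
  also have "\<dots> = 24 * \<rho>^3" by (simp add: power2_eq_square power3_eq_cube)
  finally show ?thesis using be nn by simp
qed



lemma interior_bounds:
  fixes Y :: "pt set"
  assumes fin: "finite Y" and Yne: "Y \<noteq> {}" and YQ: "Y \<subseteq> Qcube" and cardY: "card Y = n"
    and rho: "\<And>x. x \<in> Qcube \<Longrightarrow> infdist x Y \<le> \<rho>" and r0: "\<rho> > 0"
    and Om: "\<Omega> = cbox a (a + s *\<^sub>R One)" and OQ: "\<Omega> \<subseteq> Qcube" and s8: "8 * \<rho> \<le> s"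
    and rpos: "r > 0" and rn: "8 * real n * r^3 \<le> (s/4)^3 / 2"
  shows "r^2 * ((s/4)^3/2) \<le> interior_energy \<Omega> Y \<and> interior_energy \<Omega> Y \<le> \<rho>^2"
proof -
  define I where "I = {y\<in>Y. voronoi Y y \<subseteq> \<Omega> \<and> voronoi Y y \<inter> frontier \<Omega> = {}}"
  define W where "W = (\<Union>y\<in>I. voronoi Y y)"
  define F where "F x = (infdist x Y)^2" for x
  have IY: "I \<subseteq> Y" unfolding I_def by auto
  have ie: "interior_energy \<Omega> Y = integral W F"
    unfolding interior_energy_def W_def F_def using cells_sum[OF fin IY] I_def by simp
  have WQ: "W \<subseteq> Qcube" unfolding W_def using vor_sub by blast
  have finI: "finite I" using fin IY finite_subset by blast
  have clW: "closed W" unfolding W_def using finI closed_vor by (intro closed_UN) auto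
  have cF: "continuous_on Qcube F" unfolding F_def by (rule cont_sq)
  have iW: "F integrable_on W" using integrable_closed_sub[OF cF clW WQ] .
  have iQ: "F integrable_on Qcube" using intQ[OF cF] .
  have Fnn: "0 \<le> F x" for x unfolding F_def by simp
  have "integral W F \<le> integral Qcube F"
    by (rule integral_subset_le[OF WQ iW iQ]) (simp add: Fnn)
  also have "\<dots> \<le> integral Qcube (\<lambda>x. \<rho>^2)"
    by (rule integral_le[OF iQ]) (auto simp: Qcube_def F_def intro!: power_mono rho infdist_nonneg)
  also have "\<dots> = \<rho>^2" by (rule integral_Q_const)
  finally have upper: "integral W F \<le> \<rho>^2" .
  define lo :: pt where "lo = a + (3*\<rho>) *\<^sub>R One"
  define up :: pt where "up = a + (s - 3*\<rho>) *\<^sub>R One"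
  define A where "A = cbox lo up"
  have memA: "x \<in> A \<longleftrightarrow> (\<forall>i. a$i + 3*\<rho> \<le> x$i \<and> x$i \<le> a$i + s - 3*\<rho>)" for x
    unfolding A_def lo_def up_def mem_box_cart
    by (simp only: vector_add_component vector_scaleR_component one_nth real_scaleR_def mult_1_right) 
       (simp add: algebra_simps)
  have memO: "x \<in> \<Omega> \<longleftrightarrow> (\<forall>i. a$i \<le> x$i \<and> x$i \<le> a$i + s)" for x
    unfolding Om mem_box_cart
    by (simp only: vector_add_component vector_scaleR_component one_nth real_scaleR_def mult_1_right)
  have memBox: "x \<in> box a (a + s *\<^sub>R One) \<longleftrightarrow> (\<forall>i. a$i < x$i \<and> x$i < a$i + s)" for x
    unfolding mem_box_cart
    by (simp only: vector_add_component vector_scaleR_component one_nth real_scaleR_def mult_1_right)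
  have frO: "frontier \<Omega> = \<Omega> - box a (a + s *\<^sub>R One)"
    unfolding Om frontier_def by (simp add: interior_cbox)
  have AW: "A \<subseteq> W"
  proof
    fix x assume xA: "x \<in> A"
    then have xO: "x \<in> \<Omega>" using memA memO r0 by (smt (verit))
    then have xQ: "x \<in> Qcube" using OQ by blast
    obtain y where y: "y \<in> Y" "infdist x Y = dist x y" using nearest[OF fin Yne] by blast
    have xV: "x \<in> voronoi Y y" unfolding voronoi_def using xQ y infdist_le[of _ Y x] by force
    have Vbox: "voronoi Y y \<subseteq> box a (a + s *\<^sub>R One)"
    proof
      fix w assume wV: "w \<in> voronoi Y y"
      have "dist w x \<le> dist w y + dist x y" by (rule dist_triangle2)
      also have "\<dots> \<le> 2 * \<rho>"
        using vor_infdist[OF fin y(1) wV] y(2) rho[OF xQ] rho[of w] wV vor_sub by force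
      finally have dwx: "dist w x \<le> 2 * \<rho>" .
      have "a$i < w$i \<and> w$i < a$i + s" for i
      proof -
        have "\<bar>w$i - x$i\<bar> \<le> 2 * \<rho>" using coord_le_dist[of w i x] dwx by linarith
        moreover have "a$i + 3*\<rho> \<le> x$i \<and> x$i \<le> a$i + s - 3*\<rho>" using xA memA by blast
        ultimately show ?thesis using r0 by linarith
      qed
      then show "w \<in> box a (a + s *\<^sub>R One)" using memBox by blast
    qed
    have "box a (a + s *\<^sub>R One) \<subseteq> \<Omega>" unfolding Om by (rule box_subset_cbox)
    then have "y \<in> I" unfolding I_def frO using Vbox y(1) by blast
    then show "x \<in> W" unfolding W_def using xV by blast
  qed
  have AQ: "A \<subseteq> Qcube" using AW WQ by blast
  have iA: "F integrable_on A" unfolding A_def by (rule integrable_continuous) (use cF AQ A_def in \<open>auto intro: continuous_on_subset\<close>)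
  have "integral A F \<le> integral W F"
    by (rule integral_subset_le[OF AW iA iW]) (simp add: Fnn)
  define cb where "cb y = cbox (y - r *\<^sub>R One) (y + r *\<^sub>R One)" for y :: pt
  define G where "G x = r^2 - r^2 * (\<Sum>y\<in>Y. if x \<in> cb y then 1 else 0)" for x
  have pw: "G x \<le> F x" if xA: "x \<in> A" for x
  proof (cases "\<exists>y\<in>Y. x \<in> cb y")
    case True
    then obtain y where "y \<in> Y" "x \<in> cb y" by blast
    then have "1 \<le> (\<Sum>y\<in>Y. if x \<in> cb y then 1 else 0::real)"
      using member_le_sum[of y Y "\<lambda>y. if x \<in> cb y then 1 else 0::real"] fin by auto
    then have "G x \<le> 0" unfolding G_def by (simp add: mult_le_cancel_left1)
    then show ?thesis using Fnn[of x] by linarith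
  next
    case False
    obtain w where w: "w \<in> Y" "infdist x Y = dist x w" using nearest[OF fin Yne] by blast
    have "x \<notin> cb w" using False w by blast
    then have "\<exists>i. \<not> (w$i - r \<le> x$i \<and> x$i \<le> w$i + r)" unfolding cb_def mem_box_cart
      by (simp only: vector_add_component vector_minus_component vector_scaleR_component one_nth real_scaleR_def mult_1_right) simp
    then obtain i where "\<not> (w$i - r \<le> x$i \<and> x$i \<le> w$i + r)" by blast
    then have "r \<le> \<bar>x$i - w$i\<bar>" by linarith
    also have "\<dots> \<le> dist x w" by (rule coord_le_dist)
    finally have "r^2 \<le> F x" unfolding F_def w(2) using rpos by (intro power_mono) auto
    moreover have "(\<Sum>y\<in>Y. if x \<in> cb y then 1 else 0::real) = 0" using False by (intro sum.neutral) auto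
    ultimately show ?thesis unfolding G_def by simp
  qed
  have Ac: "A = cbox lo up" by (simp add: A_def)
  have iI: "(\<lambda>x. if x \<in> cb y then 1 else 0::real) integrable_on A" for y
    using ind_cbox_int(1)[OF Ac, of "cb y"] cb_def by blast
  have bI: "integral A (\<lambda>x. if x \<in> cb y then 1 else 0::real) \<le> (2*r)^3" for y
  proof -
    have w: "(y + r *\<^sub>R One)$i - (y - r *\<^sub>R One)$i = 2*r" for i
      by (simp only: vector_add_component vector_minus_component vector_scaleR_component one_nth real_scaleR_def mult_1_right)
    have "integral A (\<lambda>x. if x \<in> cb y then 1 else 0::real) \<le> measure lborel (cb y)"
      using ind_cbox_int(2)[OF Ac, of "cb y"] cb_def by blast
    also have "\<dots> = (2*r)^3" unfolding cb_def
      by (rule content_cube[OF w]) (use rpos in simp)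
    finally show ?thesis .
  qed
  have iS: "(\<lambda>x. \<Sum>y\<in>Y. if x \<in> cb y then 1 else 0::real) integrable_on A"
    by (rule integrable_sum[OF fin]) (use iI in blast)
  have iG: "G integrable_on A" unfolding G_def
    by (intro integrable_diff integrable_const[of _ lo up, folded Ac] integrable_on_mult_right iS)
  have wA: "up$i - lo$i = s - 6*\<rho>" for i unfolding up_def lo_def
    by (simp only: vector_add_component vector_scaleR_component one_nth real_scaleR_def mult_1_right)
  have mA: "measure lborel A = (s - 6*\<rho>)^3" unfolding A_def
    by (rule content_cube[OF wA]) (use s8 r0 in simp)
  have "integral A G = r^2 * measure lborel A - r^2 * (\<Sum>y\<in>Y. integral A (\<lambda>x. if x \<in> cb y then 1 else 0::real))"
  proof -
    have c1: "(\<lambda>x. r^2) integrable_on A" unfolding Ac by (rule integrable_const)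
    have c2: "(\<lambda>x. r^2 * (\<Sum>y\<in>Y. if x \<in> cb y then 1 else 0::real)) integrable_on A"
      by (rule integrable_on_mult_right[OF iS])
    have "integral A G = integral A (\<lambda>x. r^2) - integral A (\<lambda>x. r^2 * (\<Sum>y\<in>Y. if x \<in> cb y then 1 else 0::real))"
      unfolding G_def by (rule integral_diff[OF c1 c2])
    also have "integral A (\<lambda>x. r^2) = r^2 * measure lborel A" unfolding Ac by simp
    also have "integral A (\<lambda>x. r^2 * (\<Sum>y\<in>Y. if x \<in> cb y then 1 else 0::real))
       = r^2 * integral A (\<lambda>x. \<Sum>y\<in>Y. if x \<in> cb y then 1 else 0::real)" by simp
    also have "integral A (\<lambda>x. \<Sum>y\<in>Y. if x \<in> cb y then 1 else 0::real)
       = (\<Sum>y\<in>Y. integral A (\<lambda>x. if x \<in> cb y then 1 else 0::real))"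
      by (rule integral_sum[OF fin]) (use iI in blast)
    finally show ?thesis .
  qed
  also have "\<dots> \<ge> r^2 * (s/4)^3 - r^2 * (real n * (2*r)^3)"
  proof -
    have "(s/4)^3 \<le> (s - 6*\<rho>)^3" using s8 r0 by (intro power_mono) auto
    then have a1: "r^2 * (s/4)^3 \<le> r^2 * measure lborel A" unfolding mA using rpos by (intro mult_left_mono) auto
    have "(\<Sum>y\<in>Y. integral A (\<lambda>x. if x \<in> cb y then 1 else 0::real)) \<le> (\<Sum>y\<in>Y. (2*r)^3)"
      by (rule sum_mono) (rule bI)
    also have "\<dots> = real n * (2*r)^3" using cardY by simp
    finally have a2: "r^2 * (\<Sum>y\<in>Y. integral A (\<lambda>x. if x \<in> cb y then 1 else 0::real)) \<le> r^2 * (real n * (2*r)^3)"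
      using rpos by (intro mult_left_mono) auto
    show ?thesis using a1 a2 by linarith
  qed
  finally have "r^2 * (s/4)^3 - r^2 * (real n * (2*r)^3) \<le> integral A G" .
  moreover have "r^2 * ((s/4)^3/2) \<le> r^2 * (s/4)^3 - r^2 * (real n * (2*r)^3)"
  proof -
    have "real n * (2*r)^3 \<le> (s/4)^3/2" using rn by (simp add: power_mult_distrib)
    then have "r^2 * (real n * (2*r)^3) \<le> r^2 * ((s/4)^3/2)" using rpos by (intro mult_left_mono) auto
    then show ?thesis by (simp add: algebra_simps)
  qed
  moreover have "integral A G \<le> integral A F" by (rule integral_le[OF iG iA pw])
  ultimately have "r^2 * ((s/4)^3/2) \<le> integral W F" using \<open>integral A F \<le> integral W F\<close> by linarith
  then show ?thesis using upper ie by simp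
qed


lemma covering:
  assumes "is_minimizer n Y" "n \<ge> 64" "x \<in> Qcube"
  shows "infdist x Y \<le> 1161216 / real n powr (1/3)"
proof -
  have "Qcube \<noteq> {}" using zero_in_Q by blast
  then obtain x0 where x0: "x0 \<in> Qcube" "\<forall>y\<in>Qcube. infdist y Y \<le> infdist x0 Y"
    using continuous_attains_sup[OF compact_Qcube _ continuous_on_infdist[OF continuous_on_id, of Qcube Y]]
    by blast
  have c: "infdist x0 Y * real n powr (1/3) \<le> 1161216"
    by (rule covering_max[OF assms(1,2) x0(1)]) (use x0(2) in blast)
  have hpos: "real n powr (1/3) > 0" using assms(2) by simp
  then have "infdist x0 Y \<le> 1161216 / real n powr (1/3)" using c by (simp add: pos_le_divide_eq)
  then show ?thesis using x0(2) assms(3) by force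
qed

lemma aux_h2: fixes n :: nat assumes "real n > 0" shows "(real n powr (1/3))^2 = real n powr (2/3)"
proof -
  have "(real n powr (1/3))^2 = real n powr (of_nat 2 * (1/3))" using assms by (intro powr_power) simp
  also have "of_nat 2 * (1/3::real) = 2/3" by simp
  finally show ?thesis .
qed
lemma aux_h3: fixes n :: nat assumes "real n > 0" shows "(real n powr (1/3))^3 = real n"
proof -
  have "(real n powr (1/3))^3 = real n powr (of_nat 3 * (1/3))" using assms by (intro powr_power) simp
  also have "of_nat 3 * (1/3::real) = 1" by simp
  finally show ?thesis using assms by simp
qed
lemma aux_hm: fixes n :: nat and h :: real assumes "h^2 = real n powr (2/3)" shows "real n powr (-2/3) = 1 / h^2"
  unfolding assms by (simp add: powr_minus_divide)
lemma aux_a1: fixes K h :: real shows "(K/h)^3 = K^3 * (1 / h^3)"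
  by (simp add: power_divide)
lemma aux_a2: fixes s h :: real assumes "h > 0" shows "8 * h^3 * (s / (11*h))^3 = 8 * s^3 / 1331"
  using assms by (simp add: power_divide power_mult_distrib)
lemma aux_a3: fixes s h :: real assumes "h > 0" shows "(s / (11*h))^2 * ((s/4)^3/2) = s^5 / 15488 * (1 / h^2)"
  using assms by (simp add: power_divide power_mult_distrib eval_nat_numeral)
lemma aux_a4: fixes K h :: real shows "(K/h)^2 = K^2 * (1 / h^2)"
  by (simp add: power_divide)
lemma aux_a5: fixes s :: real assumes "s > 0" shows "8 * s^3 / 1331 \<le> (s/4)^3 / 2"
  using assms by (simp add: power_divide)

lemma key_bounds:
  fixes Y :: "pt set" and \<Omega> :: "pt set"
  assumes min: "is_minimizer n Y" and n64: "n \<ge> 64"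
    and Om: "\<Omega> = cbox a (a + s *\<^sub>R One)" and s0: "s > 0" and OQ: "\<Omega> \<subseteq> Qcube"
    and hbig: "real n powr (1/3) \<ge> 8 * 1161216 / s"
  shows "0 \<le> boundary_energy \<Omega> Y \<and> boundary_energy \<Omega> Y \<le> 24 * 1161216^3 * (1 / real n) \<and>
         s^5 / 15488 * real n powr (-2/3) \<le> interior_energy \<Omega> Y \<and>
         interior_energy \<Omega> Y \<le> 1161216^2 * real n powr (-2/3)"
proof -
  define K :: real where "K = 1161216"
  define h where "h = real n powr (1/3)"
  have fin: "finite Y" and cardY: "card Y = n" and YQ: "Y \<subseteq> Qcube"
    using min unfolding is_minimizer_def by auto
  have Yne: "Y \<noteq> {}" using cardY n64 by auto
  have npos: "real n > 0" using n64 by simp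
  have h0: "h > 0" unfolding h_def using npos by simp
  have h3: "h^3 = real n" unfolding h_def using aux_h3[OF npos] .
  have h2: "h^2 = real n powr (2/3)" unfolding h_def using aux_h2[OF npos] .
  have hm: "real n powr (-2/3) = 1 / h^2" using aux_hm[OF h2] .
  define \<rho> where "\<rho> = K / h"
  have r0: "\<rho> > 0" unfolding \<rho>_def K_def using h0 by simp
  have rho: "infdist x Y \<le> \<rho>" if "x \<in> Qcube" for x
    using covering[OF min n64 that] unfolding \<rho>_def K_def h_def .
  have s8: "8 * \<rho> \<le> s"
  proof -
    have "8 * K / s \<le> h" using hbig unfolding K_def h_def by simp
    then have "8 * K \<le> h * s" using s0 by (simp add: pos_divide_le_eq)
    then show ?thesis unfolding \<rho>_def using h0 by (simp add: pos_divide_le_eq mult.commute)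
  qed
  have bd: "0 \<le> boundary_energy \<Omega> Y \<and> boundary_energy \<Omega> Y \<le> 24 * \<rho>^3"
    by (rule boundary_bound[OF fin Yne YQ rho _ Om]) (use r0 in auto)
  have "\<rho>^3 = K^3 * (1 / real n)" unfolding \<rho>_def h3[symmetric] by (rule aux_a1)
  then have bd2: "boundary_energy \<Omega> Y \<le> 24 * K^3 * (1 / real n)" using bd by simp
  define r where "r = s / (11 * h)"
  have rpos: "r > 0" unfolding r_def using s0 h0 by simp
  have "8 * real n * r^3 = 8 * s^3 / 1331" unfolding r_def h3[symmetric] by (rule aux_a2[OF h0])
  also have "\<dots> \<le> (s/4)^3 / 2" by (rule aux_a5[OF s0])
  finally have rn: "8 * real n * r^3 \<le> (s/4)^3 / 2" .
  have ib: "r^2 * ((s/4)^3/2) \<le> interior_energy \<Omega> Y \<and> interior_energy \<Omega> Y \<le> \<rho>^2"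
    by (rule interior_bounds[OF fin Yne YQ cardY rho r0 Om OQ s8 rpos rn])
  have "r^2 * ((s/4)^3/2) = s^5 / 15488 * real n powr (-2/3)"
    unfolding hm r_def by (rule aux_a3[OF h0])
  moreover have "\<rho>^2 = K^2 * real n powr (-2/3)" unfolding hm \<rho>_def by (rule aux_a4)
  ultimately show ?thesis using ib bd bd2 unfolding K_def by simp
qed

theorem proposition6p1:
  fixes Y :: "nat \<Rightarrow> pt set" and \<Omega> :: "pt set"
  assumes "\<And>n. is_minimizer n (Y n)"
    and "is_cube \<Omega>" and "\<Omega> \<subseteq> Qcube"
  shows "(\<lambda>n. boundary_energy \<Omega> (Y n)) \<in> O(\<lambda>n. 1 / real n) \<and>
         (\<lambda>n. interior_energy \<Omega> (Y n)) \<in> \<Theta>(\<lambda>n. real n powr (-2/3)) \<and>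
         (\<lambda>n. boundary_energy \<Omega> (Y n)) \<in> o(\<lambda>n. interior_energy \<Omega> (Y n))"
proof -
  obtain a s where s0: "s > 0" and Om: "\<Omega> = cbox a (a + s *\<^sub>R One)"
    using assms(2) unfolding is_cube_def by blast
  define c where "c = s^5 / 15488"
  have c0: "c > 0" unfolding c_def using s0 by simp
  have hlim: "filterlim (\<lambda>n::nat. real n powr (1/3)) at_top at_top" by real_asymp
  have ev1: "eventually (\<lambda>n::nat. real n powr (1/3) \<ge> 8 * 1161216 / s) at_top"
    using hlim unfolding filterlim_at_top by blast
  have ev: "eventually (\<lambda>n. 0 \<le> boundary_energy \<Omega> (Y n) \<and> boundary_energy \<Omega> (Y n) \<le> 24 * 1161216^3 * (1 / real n) \<and>
         c * real n powr (-2/3) \<le> interior_energy \<Omega> (Y n) \<and>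
         interior_energy \<Omega> (Y n) \<le> 1161216^2 * real n powr (-2/3)) at_top"
    using eventually_conj[OF eventually_ge_at_top[of "64::nat"] ev1]
  proof eventually_elim
    case (elim n)
    then show ?case using key_bounds[OF assms(1) _ Om s0 assms(3), of n] unfolding c_def by blast
  qed
  have O1: "(\<lambda>n. boundary_energy \<Omega> (Y n)) \<in> O(\<lambda>n. 1 / real n)"
    by (rule bigoI[of _ "24 * 1161216^3"]) (use ev in \<open>auto elim!: eventually_mono\<close>)
  have T: "(\<lambda>n. interior_energy \<Omega> (Y n)) \<in> \<Theta>(\<lambda>n. real n powr (-2/3))"
  proof (rule bigthetaI'[OF c0, of "1161216^2"])
    show "eventually (\<lambda>n. c * norm (real n powr (-2/3)) \<le> norm (interior_energy \<Omega> (Y n)) \<and>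
        norm (interior_energy \<Omega> (Y n)) \<le> 1161216^2 * norm (real n powr (-2/3))) at_top"
      using ev
    proof eventually_elim
      case (elim n)
      have "0 \<le> c * real n powr (-2/3)" using c0 by simp
      then show ?case using elim by simp
    qed
  qed simp
  have so: "(\<lambda>n. 1 / real n) \<in> o(\<lambda>n. real n powr (-2/3))" by real_asymp
  have bo: "(\<lambda>n. real n powr (-2/3)) \<in> O(\<lambda>n. interior_energy \<Omega> (Y n))"
    using T bigthetaD2 bigomega_iff_bigo by blast
  have "(\<lambda>n. boundary_energy \<Omega> (Y n)) \<in> o(\<lambda>n. interior_energy \<Omega> (Y n))"
    using landau_o.big_small_trans[OF O1 landau_o.small_big_trans[OF so bo]] .
  then show ?thesis using O1 T by blast
qed

end
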